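(* Let $G$ be a graph with $n$ vertices and $m$ edges, and let $t(G)$ be its number of triangles. Then \[ 6n\,t(G)\geq \bigl(n+\lambda_n(G)\bigr)\sum_{u\in V(G)} d^2(u)-2nm\,\lambda_n(G), \] with equality if and only if $G$ is a complete multipartite graph (i.e. $V(G)$ can be partitioned into nonempty independent sets such that any two vertices in different sets are adjacent; a single part, i.e. an edgeless graph, is allowed).
   Context: All graphs are finite, simple and undirected. $d(u)$ denotes the degree of vertex $u$, and $t(G)$ the number of triangles (copies of $K_3$) in $G$. For a graph $G$ of order $n$, $L(G)=D(G)-A(G)$ is its Laplacian, where $A(G)$ is the adjacency matrix and $D(G)$ the diagonal degree matrix; its eigenvalues are $0=\lambda_1(G)\leq\dots\leq\lambda_n(G)$, so $\lambda_n(G)$ is the largest Laplacian eigenvalue. *)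

theory Defs
  imports "HOL-Analysis.Analysis"
begin

definition simple_graph :: "('n::finite \<Rightarrow> 'n \<Rightarrow> bool) \<Rightarrow> bool" where
  "simple_graph E \<longleftrightarrow> (\<forall>u v. E u v \<longrightarrow> E v u) \<and> (\<forall>u. \<not> E u u)"

definition degree :: "('n::finite \<Rightarrow> 'n \<Rightarrow> bool) \<Rightarrow> 'n \<Rightarrow> nat" where
  "degree E u = card {v. E u v}"

definition edges :: "('n::finite \<Rightarrow> 'n \<Rightarrow> bool) \<Rightarrow> 'n set set" where
  "edges E = {{u, v} | u v. E u v}"

definition triangles :: "('n::finite \<Rightarrow> 'n \<Rightarrow> bool) \<Rightarrow> 'n set set" where
  "triangles E = {{u, v, w} | u v w. E u v \<and> E v w \<and> E u w}"

definition num_triangles :: "('n::finite \<Rightarrow> 'n \<Rightarrow> bool) \<Rightarrow> nat" where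
  "num_triangles E = card (triangles E)"

definition adjacency_matrix :: "('n::finite \<Rightarrow> 'n \<Rightarrow> bool) \<Rightarrow> real^'n^'n" where
  "adjacency_matrix E = (\<chi> i j. if E i j then 1 else 0)"

definition degree_matrix :: "('n::finite \<Rightarrow> 'n \<Rightarrow> bool) \<Rightarrow> real^'n^'n" where
  "degree_matrix E = (\<chi> i j. if i = j then real (degree E i) else 0)"

definition laplacian :: "('n::finite \<Rightarrow> 'n \<Rightarrow> bool) \<Rightarrow> real^'n^'n" where
  "laplacian E = degree_matrix E - adjacency_matrix E"

definition is_eigenvalue :: "real^'n^'n \<Rightarrow> real \<Rightarrow> bool" where
  "is_eigenvalue A \<mu> \<longleftrightarrow> (\<exists>x. x \<noteq> 0 \<and> A *v x = \<mu> *\<^sub>R x)"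

definition lap_max :: "('n::finite \<Rightarrow> 'n \<Rightarrow> bool) \<Rightarrow> real" where
  "lap_max E = Max {\<mu>. is_eigenvalue (laplacian E) \<mu>}"

definition complete_multipartite :: "('n::finite \<Rightarrow> 'n \<Rightarrow> bool) \<Rightarrow> bool" where
  "complete_multipartite E \<longleftrightarrow>
     (\<exists>P. \<Union>P = UNIV \<and> (\<forall>A\<in>P. A \<noteq> {}) \<and>
          (\<forall>A\<in>P. \<forall>B\<in>P. A \<noteq> B \<longrightarrow> A \<inter> B = {}) \<and>
          (\<forall>A\<in>P. \<forall>u\<in>A. \<forall>v\<in>A. \<not> E u v) \<and>
          (\<forall>A\<in>P. \<forall>B\<in>P. A \<noteq> B \<longrightarrow> (\<forall>u\<in>A. \<forall>v\<in>B. E u v)))"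

end

theory Submission
  imports Defs
begin


definition ind :: "('n::finite \<Rightarrow> 'n \<Rightarrow> bool) \<Rightarrow> 'n \<Rightarrow> 'n \<Rightarrow> real" where
  "ind E i j = (if E i j then 1 else 0)"

lemma ind_sym: "simple_graph E \<Longrightarrow> ind E i j = ind E j i"
  by (auto simp: ind_def simple_graph_def)

lemma ind_sq: "ind E i j * ind E i j = ind E i j"
  by (simp add: ind_def)

lemma degree_sum: "real (degree E i) = (\<Sum>j\<in>UNIV. ind E i j)"
  by (simp add: degree_def ind_def sum.If_cases)

lemma lap_mult: "(laplacian E *v x) $ i = real (degree E i) * x $ i - (\<Sum>j\<in>UNIV. ind E i j * x $ j)"
proof -
  have "(laplacian E *v x) $ i = (\<Sum>j\<in>UNIV. (if i = j then real (degree E i) * x $ j else 0) - ind E i j * x $ j)"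
    unfolding laplacian_def degree_matrix_def adjacency_matrix_def matrix_vector_mult_def ind_def
    by (auto simp: left_diff_distrib intro!: sum.cong)
  also have "\<dots> = real (degree E i) * x $ i - (\<Sum>j\<in>UNIV. ind E i j * x $ j)"
    by (simp add: sum_subtractf)
  finally show ?thesis .
qed

lemma lap_transpose: "simple_graph E \<Longrightarrow> transpose (laplacian E) = laplacian E"
  by (auto simp: transpose_def laplacian_def degree_matrix_def adjacency_matrix_def simple_graph_def
      vec_eq_iff)

lemma lap_sym: "simple_graph E \<Longrightarrow> (laplacian E *v x) \<bullet> y = x \<bullet> (laplacian E *v y)"
  by (metis dot_lmul_matrix lap_transpose vector_transpose_matrix)

lemma inner_vec: "x \<bullet> (y::real^'n) = (\<Sum>i\<in>UNIV. x $ i * y $ i)"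
  by (simp add: inner_vec_def)



lemma sum_sym_swap:
  assumes "simple_graph E"
  shows "(\<Sum>i\<in>UNIV. \<Sum>j\<in>UNIV. ind E i j * f j) = (\<Sum>i\<in>UNIV. \<Sum>j\<in>UNIV. ind E i j * f i)"
proof -
  have "(\<Sum>i\<in>UNIV. \<Sum>j\<in>UNIV. ind E i j * f j) = (\<Sum>j\<in>UNIV. \<Sum>i\<in>UNIV. ind E i j * f j)"
    by (rule sum.swap)
  also have "\<dots> = (\<Sum>j\<in>UNIV. \<Sum>i\<in>UNIV. ind E j i * f j)"
    using ind_sym[OF assms] by simp
  finally show ?thesis .
qed

definition Q :: "('n::finite \<Rightarrow> 'n \<Rightarrow> bool) \<Rightarrow> real^'n \<Rightarrow> real" where
  "Q E x = x \<bullet> (laplacian E *v x)"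

lemma Q_formula:
  assumes "simple_graph E"
  shows "Q E x = (1/2) * (\<Sum>i\<in>UNIV. \<Sum>j\<in>UNIV. ind E i j * (x$i - x$j)^2)"
proof -
  have A: "(\<Sum>i\<in>UNIV. \<Sum>j\<in>UNIV. ind E i j * (x$i - x$j)^2)
     = (\<Sum>i\<in>UNIV. \<Sum>j\<in>UNIV. ind E i j * (x$i)^2) + (\<Sum>i\<in>UNIV. \<Sum>j\<in>UNIV. ind E i j * (x$j)^2)
       - 2 * (\<Sum>i\<in>UNIV. \<Sum>j\<in>UNIV. ind E i j * x$i * x$j)"
    by (simp add: power2_diff algebra_simps sum.distrib sum_subtractf sum_distrib_left)
  have B: "(\<Sum>i\<in>UNIV. \<Sum>j\<in>UNIV. ind E i j * (x$j)^2) = (\<Sum>i\<in>UNIV. \<Sum>j\<in>UNIV. ind E i j * (x$i)^2)"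
    by (rule sum_sym_swap[OF assms])
  have C: "Q E x = (\<Sum>i\<in>UNIV. \<Sum>j\<in>UNIV. ind E i j * (x$i)^2) - (\<Sum>i\<in>UNIV. \<Sum>j\<in>UNIV. ind E i j * x$i * x$j)"
    unfolding Q_def inner_vec_def
    by (simp add: lap_mult degree_sum algebra_simps sum_distrib_left sum_distrib_right sum_subtractf power2_eq_square)
  show ?thesis using A B C by simp
qed

lemma Q_le_n:
  fixes x :: "real^'n::finite"
  assumes "simple_graph E"
  shows "real CARD('n) * (x \<bullet> x) - Q E x = (\<Sum>i\<in>UNIV. x$i)^2
      + (1/2) * (\<Sum>i\<in>UNIV. \<Sum>j\<in>UNIV. (1 - ind E i j) * (x$i - x$j)^2)"
proof -
  have A: "(\<Sum>i\<in>UNIV. \<Sum>j\<in>UNIV. (x$i - x$j)^2) = 2 * real CARD('n) * (x \<bullet> x) - 2 * (\<Sum>i\<in>UNIV. x$i)^2"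
    by (simp add: inner_vec_def power2_diff algebra_simps sum.distrib sum_subtractf sum_distrib_left
        sum_distrib_right power2_eq_square sum_product)
  have B: "(\<Sum>i\<in>UNIV. \<Sum>j\<in>UNIV. (1 - ind E i j) * (x$i - x$j)^2) =
     (\<Sum>i\<in>UNIV. \<Sum>j\<in>UNIV. (x$i - x$j)^2) - (\<Sum>i\<in>UNIV. \<Sum>j\<in>UNIV. ind E i j * (x$i - x$j)^2)"
    by (simp add: left_diff_distrib sum_subtractf)
  show ?thesis using A B Q_formula[OF assms, of x] by (simp add: algebra_simps)
qed



lemma psd_kernel:
  fixes A :: "real^'n::finite \<Rightarrow> real^'n"
  assumes lin: "linear A" and sym: "\<And>x y. A x \<bullet> y = x \<bullet> A y"
    and psd: "\<And>y. 0 \<le> y \<bullet> A y" and x0: "x \<bullet> A x = 0"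
  shows "A x = 0"
proof -
  define z where "z = A x"
  define a where "a = z \<bullet> A z"
  define b where "b = z \<bullet> z"
  have a0: "0 \<le> a" unfolding a_def by (rule psd)
  have key: "0 \<le> 2 * t * b + t^2 * a" for t
  proof -
    have "0 \<le> (x + t *\<^sub>R z) \<bullet> A (x + t *\<^sub>R z)" by (rule psd)
    also have "\<dots> = x \<bullet> A x + t * (x \<bullet> A z) + t * (z \<bullet> A x) + t^2 * (z \<bullet> A z)"
      by (simp add: linear_add[OF lin] linear_scale[OF lin] inner_add_left inner_add_right
          algebra_simps power2_eq_square)
    also have "x \<bullet> A z = b" unfolding b_def z_def using sym[of x "A x"]
      by (simp add: inner_commute)
    also have "z \<bullet> A x = b" unfolding b_def z_def by simp
    finally show ?thesis using x0 a_def by (simp add: algebra_simps)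
  qed
  have b0: "0 \<le> b" unfolding b_def by simp
  have "b = 0"
  proof (rule ccontr)
    assume "b \<noteq> 0"
    then have bp: "b > 0" using b0 by simp
    define t where "t = - b / (a + 1)"
    have h: "a + 1 \<noteq> 0" using a0 by simp
    have ts: "t * (a + 1) = - b" unfolding t_def using h by simp
    have k: "0 \<le> 2 * t * b + t^2 * a" by (rule key)
    have "(a + 1)^2 * (2 * t * b + t^2 * a) = 2 * b * (a + 1) * (t * (a + 1)) + a * (t * (a + 1))^2"
      by (simp add: algebra_simps power2_eq_square)
    also have "\<dots> = - (b^2 * (a + 2))" unfolding ts by (simp add: algebra_simps power2_eq_square)
    finally have e: "(a + 1)^2 * (2 * t * b + t^2 * a) = - (b^2 * (a + 2))" .
    have "0 \<le> (a + 1)^2 * (2 * t * b + t^2 * a)" using k by simp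
    moreover have "b^2 * (a + 2) > 0" using bp a0 by simp
    ultimately show False using e by linarith
  qed
  then show ?thesis unfolding b_def z_def by simp
qed

abbreviation eigs :: "('n::finite \<Rightarrow> 'n \<Rightarrow> bool) \<Rightarrow> real set" where
  "eigs E \<equiv> {\<mu>. is_eigenvalue (laplacian E) \<mu>}"

lemma eigs_finite:
  assumes "simple_graph E"
  shows "finite (eigs E)"
proof -
  define v where "v \<mu> = (SOME x. x \<noteq> 0 \<and> laplacian E *v x = \<mu> *\<^sub>R x)" for \<mu>
  have v: "v \<mu> \<noteq> 0 \<and> laplacian E *v v \<mu> = \<mu> *\<^sub>R v \<mu>" if "\<mu> \<in> eigs E" for \<mu>
  proof -
    from that obtain y where "y \<noteq> 0 \<and> laplacian E *v y = \<mu> *\<^sub>R y"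
      unfolding is_eigenvalue_def by auto
    then show ?thesis unfolding v_def by (rule someI)
  qed
  have inj: "inj_on v (eigs E)"
  proof (rule inj_onI)
    fix \<mu> \<nu> assume m: "\<mu> \<in> eigs E" and n: "\<nu> \<in> eigs E" and e: "v \<mu> = v \<nu>"
    then have "\<mu> *\<^sub>R v \<mu> = \<nu> *\<^sub>R v \<mu>" using v[OF m] v[OF n] by metis
    then have "(\<mu> - \<nu>) *\<^sub>R v \<mu> = 0" by (simp add: algebra_simps)
    then show "\<mu> = \<nu>" using v[OF m] by simp
  qed
  have orth: "pairwise orthogonal (v ` eigs E)"
  proof (rule pairwiseI)
    fix a b assume a: "a \<in> v ` eigs E" and b: "b \<in> v ` eigs E" and ab: "a \<noteq> b"
    then obtain \<mu> \<nu> where m: "\<mu> \<in> eigs E" and n: "\<nu> \<in> eigs E" and ne: "v \<mu> \<noteq> v \<nu>"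
      and abd: "a = v \<mu>" "b = v \<nu>" by auto
    then show "orthogonal a b"
    proof -
    have "\<mu> \<noteq> \<nu>" using ne by auto
    have "\<mu> * (v \<mu> \<bullet> v \<nu>) = (laplacian E *v v \<mu>) \<bullet> v \<nu>" using v[OF m] by simp
    also have "\<dots> = v \<mu> \<bullet> (laplacian E *v v \<nu>)" by (rule lap_sym[OF assms])
    also have "\<dots> = \<nu> * (v \<mu> \<bullet> v \<nu>)" using v[OF n] by simp
    finally have "(\<mu> - \<nu>) * (v \<mu> \<bullet> v \<nu>) = 0" by (simp add: algebra_simps)
    then show "orthogonal a b" using \<open>\<mu> \<noteq> \<nu>\<close> abd by (simp add: orthogonal_def)
  qed
  qed
  have "0 \<notin> v ` eigs E" using v by auto
  then have "independent (v ` eigs E)" using orth pairwise_orthogonal_independent by blast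
  then have "finite (v ` eigs E)" using independent_bound by blast
  then show ?thesis using inj finite_imageD by blast
qed

lemma eig0: "0 \<in> eigs E"
proof -
  have "laplacian E *v (\<chi> i. 1) = 0"
    by (simp add: vec_eq_iff lap_mult degree_sum)
  moreover have "(\<chi> i. (1::real)) \<noteq> 0" by (simp add: vec_eq_iff)
  ultimately show ?thesis unfolding is_eigenvalue_def by force
qed

lemma lam_ge:
  assumes "simple_graph E" "\<mu> \<in> eigs E"
  shows "\<mu> \<le> lap_max E"
  unfolding lap_max_def using eigs_finite[OF assms(1)] assms(2) by simp

lemma lam_in:
  assumes "simple_graph E"
  shows "lap_max E \<in> eigs E"
  unfolding lap_max_def using eigs_finite[OF assms(1)] eig0
  by (metis Max_in empty_iff)

lemma Q_scale: "Q E (c *\<^sub>R x) = c^2 * Q E x"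
  by (simp add: Q_def matrix_vector_mult_scaleR power2_eq_square)

lemma rayleigh:
  assumes "simple_graph E"
  shows "Q E x \<le> lap_max E * (x \<bullet> x)"
proof -
  have cont: "continuous_on (sphere (0::real^'a) 1) (Q E)"
    unfolding Q_def
    by (intro continuous_intros linear_continuous_on matrix_vector_mul_bounded_linear)
  obtain x0 where x0: "x0 \<in> sphere 0 1" and mx: "\<forall>y\<in>sphere 0 1. Q E y \<le> Q E x0"
    using continuous_attains_sup[OF compact_sphere _ cont] by (auto simp: sphere_eq_empty)
  define \<mu> where "\<mu> = Q E x0"
  have bound: "Q E y \<le> \<mu> * (y \<bullet> y)" for y
  proof (cases "y = 0")
    case True then show ?thesis by (simp add: Q_def)
  next
    case False
    define u where "u = (1 / norm y) *\<^sub>R y"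
    have u: "u \<in> sphere 0 1" using False by (simp add: u_def)
    have y: "y = norm y *\<^sub>R u" using False by (simp add: u_def)
    have "Q E y = (norm y)^2 * Q E u" by (subst y, rule Q_scale)
    also have "\<dots> \<le> (norm y)^2 * \<mu>" using mx u unfolding \<mu>_def by (simp add: mult_left_mono)
    also have "(norm y)^2 = y \<bullet> y" by (simp add: power2_norm_eq_inner)
    finally show ?thesis by (simp add: mult.commute)
  qed
  define A where "A y = \<mu> *\<^sub>R y - laplacian E *v y" for y
  have lin: "linear A" unfolding A_def
    by (simp add: linear_iff matrix_vector_right_distrib matrix_vector_mult_scaleR algebra_simps)
  have sym: "A x \<bullet> y = x \<bullet> A y" for x y
    unfolding A_def using lap_sym[OF assms, of y x] by (simp add: inner_diff_left inner_diff_right lap_sym[OF assms] inner_commute)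
  have psd: "0 \<le> y \<bullet> A y" for y
    using bound[of y] unfolding A_def Q_def by (simp add: inner_diff_right)
  have nx: "x0 \<bullet> x0 = 1" using x0 by (simp add: dot_square_norm)
  have "x0 \<bullet> A x0 = 0" unfolding A_def using nx by (simp add: inner_diff_right \<mu>_def Q_def)
  then have "A x0 = 0" by (rule psd_kernel[OF lin sym psd])
  then have "laplacian E *v x0 = \<mu> *\<^sub>R x0" unfolding A_def by simp
  moreover have "x0 \<noteq> 0" using x0 by auto
  ultimately have "\<mu> \<in> eigs E" unfolding is_eigenvalue_def by auto
  then have "\<mu> \<le> lap_max E" by (rule lam_ge[OF assms])
  then have "\<mu> * (x \<bullet> x) \<le> lap_max E * (x \<bullet> x)" by (simp add: mult_right_mono)
  then show ?thesis using bound[of x] by simp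
qed

lemma rayleigh_eq:
  assumes "simple_graph E" and eq: "Q E x = lap_max E * (x \<bullet> x)"
  shows "laplacian E *v x = lap_max E *\<^sub>R x"
proof -
  define A where "A y = lap_max E *\<^sub>R y - laplacian E *v y" for y
  have lin: "linear A" unfolding A_def
    by (simp add: linear_iff matrix_vector_right_distrib matrix_vector_mult_scaleR algebra_simps)
  have sym: "A x \<bullet> y = x \<bullet> A y" for x y
    unfolding A_def using lap_sym[OF assms(1), of y x] by (simp add: inner_diff_left inner_diff_right lap_sym[OF assms(1)] inner_commute)
  have psd: "0 \<le> y \<bullet> A y" for y
    using rayleigh[OF assms(1), of y] unfolding A_def Q_def by (simp add: inner_diff_right)
  have "x \<bullet> A x = 0" unfolding A_def using eq by (simp add: inner_diff_right Q_def)
  then have "A x = 0" by (rule psd_kernel[OF lin sym psd])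
  then show ?thesis unfolding A_def by simp
qed

lemma lam_le_n:
  fixes E :: "'n::finite \<Rightarrow> 'n \<Rightarrow> bool"
  assumes "simple_graph E"
  shows "lap_max E \<le> real CARD('n)"
proof -
  obtain x where x: "x \<noteq> 0" "laplacian E *v x = lap_max E *\<^sub>R x"
    using lam_in[OF assms] unfolding is_eigenvalue_def by auto
  have "0 \<le> real CARD('n) * (x \<bullet> x) - Q E x"
    unfolding Q_le_n[OF assms] by (intro add_nonneg_nonneg mult_nonneg_nonneg sum_nonneg) (auto simp: ind_def)
  moreover have "Q E x = lap_max E * (x \<bullet> x)" unfolding Q_def using x by simp
  moreover have "x \<bullet> x > 0" using x by simp
  ultimately show ?thesis by (metis diff_ge_0_iff_ge mult_right_le_imp_le)
qed



lemma card_ind: "real (card {j. P j}) = (\<Sum>j\<in>(UNIV::'a::finite set). if P j then 1 else 0)"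
  by (simp add: sum.If_cases)

lemma edge_count:
  assumes sg: "simple_graph E"
  shows "(\<Sum>i\<in>UNIV. real (degree E i)) = 2 * real (card (edges E))"
proof -
  define P where "P = Sigma UNIV (\<lambda>u. {v. E u v})"
  have cP: "card P = (\<Sum>u\<in>UNIV. degree E u)"
    unfolding P_def degree_def by (simp add: card_SigmaI)
  define F where "F e = {p \<in> P. {fst p, snd p} = e}" for e
  have PU: "P = (\<Union>e\<in>edges E. F e)"
    unfolding P_def F_def edges_def by auto blast
  have fin: "finite (edges E)" by (simp add: finite_subset[of _ UNIV])
  have disj: "\<forall>e\<in>edges E. \<forall>e'\<in>edges E. e \<noteq> e' \<longrightarrow> F e \<inter> F e' = {}"
    unfolding F_def by auto
  have F2: "card (F e) = 2" if "e \<in> edges E" for e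
  proof -
    from that obtain u v where e: "e = {u, v}" and uv: "E u v" unfolding edges_def by auto
    have ne: "u \<noteq> v" using uv sg unfolding simple_graph_def by auto
    have vu: "E v u" using uv sg unfolding simple_graph_def by auto
    have "F e = {(u, v), (v, u)}"
      unfolding F_def P_def e using uv vu by (auto simp: doubleton_eq_iff)
    then show ?thesis using ne by simp
  qed
  have "card P = (\<Sum>e\<in>edges E. card (F e))"
    unfolding PU by (rule card_UN_disjoint[OF fin _ disj]) simp
  also have "\<dots> = 2 * card (edges E)" using F2 by simp
  finally have "(\<Sum>u\<in>UNIV. degree E u) = 2 * card (edges E)" using cP by simp
  then have "real (\<Sum>u\<in>UNIV. degree E u) = 2 * real (card (edges E))" by simp
  then show ?thesis by simp
qed

lemma tri_count:
  assumes sg: "simple_graph E"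
  shows "(\<Sum>w\<in>UNIV. \<Sum>i\<in>UNIV. \<Sum>j\<in>UNIV. ind E w i * ind E w j * ind E i j) = 6 * real (num_triangles E)"
proof -
  define P where "P = Sigma UNIV (\<lambda>w. Sigma UNIV (\<lambda>i. {j. E w i \<and> E w j \<and> E i j}))"
  have cP: "real (card P) = (\<Sum>w\<in>UNIV. \<Sum>i\<in>UNIV. \<Sum>j\<in>UNIV. ind E w i * ind E w j * ind E i j)"
  proof -
    have "card P = (\<Sum>w\<in>UNIV. \<Sum>i\<in>UNIV. card {j. E w i \<and> E w j \<and> E i j})"
      unfolding P_def by (simp add: card_SigmaI)
    then have "real (card P) = (\<Sum>w\<in>UNIV. \<Sum>i\<in>UNIV. real (card {j. E w i \<and> E w j \<and> E i j}))"
      by simp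
    also have "\<dots> = (\<Sum>w\<in>UNIV. \<Sum>i\<in>UNIV. \<Sum>j\<in>UNIV. ind E w i * ind E w j * ind E i j)"
      unfolding card_ind by (intro sum.cong refl) (auto simp: ind_def)
    finally show ?thesis .
  qed
  define F where "F t = {p \<in> P. {fst p, fst (snd p), snd (snd p)} = t}" for t
  have PU: "P = (\<Union>t\<in>triangles E. F t)"
    unfolding P_def F_def triangles_def by auto blast
  have fin: "finite (triangles E)" by (simp add: finite_subset[of _ UNIV])
  have disj: "\<forall>e\<in>triangles E. \<forall>e'\<in>triangles E. e \<noteq> e' \<longrightarrow> F e \<inter> F e' = {}"
    unfolding F_def by auto
  have F6: "card (F t) = 6" if "t \<in> triangles E" for t
  proof -
    from that obtain u v w where t: "t = {u, v, w}" and uv: "E u v" "E v w" "E u w"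
      unfolding triangles_def by auto
    have s: "E v u" "E w v" "E w u" using uv sg unfolding simple_graph_def by auto
    have ne: "u \<noteq> v" "v \<noteq> w" "u \<noteq> w" using uv sg unfolding simple_graph_def by auto
    have irr: "\<And>x. \<not> E x x" using sg unfolding simple_graph_def by auto
    have "F t = {(u,v,w), (u,w,v), (v,u,w), (v,w,u), (w,u,v), (w,v,u)}"
    proof
      show "{(u,v,w), (u,w,v), (v,u,w), (v,w,u), (w,u,v), (w,v,u)} \<subseteq> F t"
        unfolding F_def P_def t using uv s by (auto simp: insert_commute)
    next
      show "F t \<subseteq> {(u,v,w), (u,w,v), (v,u,w), (v,w,u), (w,u,v), (w,v,u)}"
      proof
        fix p assume p: "p \<in> F t"
        obtain a b c where pe: "p = (a, b, c)" by (cases p) auto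
        have abc: "E a b" "E a c" "E b c" "{a, b, c} = {u, v, w}" using p unfolding pe F_def P_def t by auto
        have d: "a \<noteq> b" "a \<noteq> c" "b \<noteq> c" using abc(1-3) irr by metis+
        have "a \<in> {u,v,w}" "b \<in> {u,v,w}" "c \<in> {u,v,w}" using abc(4) by blast+
        then show "p \<in> {(u,v,w), (u,w,v), (v,u,w), (v,w,u), (w,u,v), (w,v,u)}"
          unfolding pe using d ne abc(4) by auto
      qed
    qed
    then show ?thesis using ne by simp
  qed
  have "card P = (\<Sum>e\<in>triangles E. card (F e))"
    unfolding PU by (rule card_UN_disjoint[OF fin _ disj]) simp
  also have "\<dots> = 6 * card (triangles E)" using F6 by simp
  finally show ?thesis using cP unfolding num_triangles_def by simp
qed



definition X :: "('n::finite \<Rightarrow> 'n \<Rightarrow> bool) \<Rightarrow> 'n \<Rightarrow> real^'n" where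
  "X E w = (\<chi> i. ind E w i - real (degree E w) / real CARD('n))"

lemma sum_X: "(\<Sum>i\<in>UNIV. X E w $ i) = 0"
  by (simp add: X_def sum_subtractf degree_sum[symmetric])

lemma X_norm:
  fixes E :: "'n::finite \<Rightarrow> 'n \<Rightarrow> bool"
  shows "X E w \<bullet> X E w = real (degree E w) - real (degree E w)^2 / real CARD('n)"
proof -
  define c where "c = real (degree E w) / real CARD('n)"
  have n0: "real CARD('n) \<noteq> 0" using card_gt_0_iff[of "UNIV::'n set"] by simp
  have "X E w \<bullet> X E w = (\<Sum>i\<in>UNIV. ind E w i - 2 * c * ind E w i + c^2)"
    unfolding inner_vec X_def c_def[symmetric]
    by (intro sum.cong refl) (simp add: ind_def power2_eq_square algebra_simps)
  also have "\<dots> = real (degree E w) - 2 * c * real (degree E w) + real CARD('n) * c^2"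
    by (simp add: sum.distrib sum_subtractf sum_distrib_left degree_sum)
  also have "\<dots> = real (degree E w) - real (degree E w)^2 / real CARD('n)"
    unfolding c_def using n0 by (simp add: field_simps power2_eq_square)
  finally show ?thesis .
qed

lemma Q_X:
  assumes sg: "simple_graph E"
  shows "Q E (X E w) = (\<Sum>i\<in>UNIV. \<Sum>j\<in>UNIV. ind E i j * ind E w i)
     - (\<Sum>i\<in>UNIV. \<Sum>j\<in>UNIV. ind E w i * ind E w j * ind E i j)"
proof -
  have "Q E (X E w) = (1/2) * (\<Sum>i\<in>UNIV. \<Sum>j\<in>UNIV. ind E i j * (ind E w i - ind E w j)^2)"
    unfolding Q_formula[OF sg] X_def by simp
  also have "(\<Sum>i\<in>UNIV. \<Sum>j\<in>UNIV. ind E i j * (ind E w i - ind E w j)^2)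
     = (\<Sum>i\<in>UNIV. \<Sum>j\<in>UNIV. ind E i j * ind E w i)
      + (\<Sum>i\<in>UNIV. \<Sum>j\<in>UNIV. ind E i j * ind E w j)
      - 2 * (\<Sum>i\<in>UNIV. \<Sum>j\<in>UNIV. ind E w i * ind E w j * ind E i j)"
  proof -
    have eq: "ind E i j * (ind E w i - ind E w j)^2 = ind E i j * ind E w i + ind E i j * ind E w j
       - 2 * (ind E w i * ind E w j * ind E i j)" for i j
      by (simp add: ind_def)
    show ?thesis unfolding eq
      by (simp add: sum.distrib sum_subtractf sum_distrib_left)
  qed
  also have "(\<Sum>i\<in>UNIV. \<Sum>j\<in>UNIV. ind E i j * ind E w j) = (\<Sum>i\<in>UNIV. \<Sum>j\<in>UNIV. ind E i j * ind E w i)"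
    by (rule sum_sym_swap[OF sg])
  finally show ?thesis by (simp add: algebra_simps)
qed

lemma sum_Q_X:
  assumes sg: "simple_graph E"
  shows "(\<Sum>w\<in>UNIV. Q E (X E w)) = (\<Sum>i\<in>UNIV. real (degree E i)^2) - 6 * real (num_triangles E)"
proof -
  have A: "(\<Sum>w\<in>UNIV. \<Sum>i\<in>UNIV. \<Sum>j\<in>UNIV. ind E i j * ind E w i) = (\<Sum>i\<in>UNIV. real (degree E i)^2)"
  proof -
    have "(\<Sum>w\<in>UNIV. \<Sum>i\<in>UNIV. \<Sum>j\<in>UNIV. ind E i j * ind E w i) = (\<Sum>i\<in>UNIV. \<Sum>w\<in>UNIV. \<Sum>j\<in>UNIV. ind E i j * ind E w i)"
      by (rule sum.swap)
    also have "\<dots> = (\<Sum>i\<in>UNIV. (\<Sum>j\<in>UNIV. ind E i j) * (\<Sum>w\<in>UNIV. ind E i w))"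
      by (simp add: sum_product ind_sym[OF sg] mult.commute)
    also have "\<dots> = (\<Sum>i\<in>UNIV. real (degree E i)^2)"
      by (simp add: degree_sum power2_eq_square)
    finally show ?thesis .
  qed
  show ?thesis
    unfolding Q_X[OF sg] sum_subtractf A tri_count[OF sg, symmetric] by simp
qed

lemma X_coord:
  fixes E :: "'n::finite \<Rightarrow> 'n \<Rightarrow> bool"
  assumes sg: "simple_graph E"
  shows "(laplacian E *v X E w) $ w = - real (degree E w)"
proof -
  define c where "c = real (degree E w) / real CARD('n)"
  have irr: "ind E w w = 0" using sg by (simp add: ind_def simple_graph_def)
  have "(\<Sum>j\<in>UNIV. ind E w j * X E w $ j) = (\<Sum>j\<in>UNIV. ind E w j - c * ind E w j)"
    unfolding X_def c_def[symmetric] by (intro sum.cong refl) (simp add: ind_def)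
  also have "\<dots> = real (degree E w) - c * real (degree E w)"
    by (simp add: sum_subtractf sum_distrib_left degree_sum)
  finally show ?thesis unfolding lap_mult using irr by (simp add: X_def c_def[symmetric] algebra_simps)
qed

lemma main_identity:
  fixes E :: "'n::finite \<Rightarrow> 'n \<Rightarrow> bool"
  assumes sg: "simple_graph E"
  shows "6 * real CARD('n) * real (num_triangles E)
     - ((real CARD('n) + lap_max E) * (\<Sum>u\<in>UNIV. real (degree E u) ^ 2)
        - 2 * real CARD('n) * real (card (edges E)) * lap_max E)
     = real CARD('n) * (\<Sum>w\<in>UNIV. lap_max E * (X E w \<bullet> X E w) - Q E (X E w))"
proof -
  define n where "n = real CARD('n)"
  define l where "l = lap_max E"
  define D where "D = (\<Sum>u\<in>UNIV. real (degree E u))"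
  define D2 where "D2 = (\<Sum>u\<in>UNIV. real (degree E u) ^ 2)"
  have n0: "n \<noteq> 0" unfolding n_def using card_gt_0_iff[of "UNIV::'n set"] by simp
  have XN: "(\<Sum>w\<in>UNIV. l * (X E w \<bullet> X E w)) = l * D - l * D2 / n"
  proof -
    have "(\<Sum>w\<in>UNIV. l * (X E w \<bullet> X E w)) = (\<Sum>w\<in>UNIV. l * real (degree E w) - l * real (degree E w)^2 / n)"
      by (intro sum.cong refl) (simp add: X_norm n_def right_diff_distrib)
    also have "\<dots> = l * D - l * D2 / n"
      unfolding D_def D2_def sum_subtractf sum_distrib_left sum_divide_distrib by simp
    finally show ?thesis .
  qed
  have "(\<Sum>w\<in>UNIV. l * (X E w \<bullet> X E w) - Q E (X E w)) = l * D - l * D2 / n - (D2 - 6 * real (num_triangles E))"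
    unfolding sum_subtractf sum_Q_X[OF sg] XN D2_def by simp
  moreover have "D = 2 * real (card (edges E))" unfolding D_def by (rule edge_count[OF sg])
  ultimately show ?thesis
    unfolding n_def[symmetric] l_def[symmetric] D2_def[symmetric] using n0
    by (simp add: field_simps)
qed



definition H :: "('n::finite \<Rightarrow> 'n \<Rightarrow> bool) \<Rightarrow> bool" where
  "H E \<longleftrightarrow> (\<forall>i j w. \<not> E i j \<longrightarrow> (E w i \<longleftrightarrow> E w j))"

lemma H_cls:
  assumes sg: "simple_graph E" and h: "H E" and nij: "\<not> E i j"
  shows "{z. \<not> E i z} = {z. \<not> E j z}"
  using sg h nij unfolding H_def simple_graph_def by blast

lemma H_imp_mp:
  assumes sg: "simple_graph E" and h: "H E"
  shows "complete_multipartite E"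
proof -
  define cls where "cls a = {z. \<not> E a z}" for a
  have irr: "\<And>x. \<not> E x x" and sym: "\<And>x y. E x y \<Longrightarrow> E y x" using sg unfolding simple_graph_def by auto
  have c: "cls i = cls j" if "\<not> E i j" for i j unfolding cls_def by (rule H_cls[OF sg h that])
  have mem: "a \<in> cls a" for a unfolding cls_def using irr by simp
  show ?thesis unfolding complete_multipartite_def
  proof (intro exI[of _ "range cls"] conjI ballI impI)
    show "\<Union> (range cls) = UNIV" using mem by blast
  next
    fix A assume "A \<in> range cls" then show "A \<noteq> {}" using mem by blast
  next
    fix A B assume A: "A \<in> range cls" and B: "B \<in> range cls" and ne: "A \<noteq> B"
    from A B obtain a b where ab: "A = cls a" "B = cls b" by auto
    show "A \<inter> B = {}"
    proof (rule ccontr)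
      assume "A \<inter> B \<noteq> {}"
      then obtain z where "z \<in> cls a" "z \<in> cls b" using ab by auto
      then have "cls a = cls z" "cls b = cls z" using c unfolding cls_def by auto
      then show False using ne ab by simp
    qed
  next
    fix A u v assume A: "A \<in> range cls" and u: "u \<in> A" and v: "v \<in> A"
    from A obtain a where a: "A = cls a" by auto
    have "cls a = cls u" using u a c unfolding cls_def by auto
    then have "v \<in> cls u" using v a by simp
    then show "\<not> E u v" unfolding cls_def by simp
  next
    fix A B u v assume A: "A \<in> range cls" and B: "B \<in> range cls" and ne: "A \<noteq> B"
      and u: "u \<in> A" and v: "v \<in> B"
    from A B obtain a b where ab: "A = cls a" "B = cls b" by auto
    show "E u v"
    proof (rule ccontr)
      assume "\<not> E u v"
      then have "cls u = cls v" by (rule c)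
      moreover have "cls a = cls u" using u ab c unfolding cls_def by auto
      moreover have "cls b = cls v" using v ab c unfolding cls_def by auto
      ultimately show False using ne ab by simp
    qed
  qed
qed

lemma mp_imp_H:
  assumes sg: "simple_graph E" and mp: "complete_multipartite E"
  shows "H E"
proof -
  obtain P where P: "\<Union>P = UNIV \<and> (\<forall>A\<in>P. A \<noteq> {}) \<and>
          (\<forall>A\<in>P. \<forall>B\<in>P. A \<noteq> B \<longrightarrow> A \<inter> B = {}) \<and>
          (\<forall>A\<in>P. \<forall>u\<in>A. \<forall>v\<in>A. \<not> E u v) \<and>
          (\<forall>A\<in>P. \<forall>B\<in>P. A \<noteq> B \<longrightarrow> (\<forall>u\<in>A. \<forall>v\<in>B. E u v))"
    using mp unfolding complete_multipartite_def by (elim exE)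
  have U: "\<Union>P = UNIV" using P by (elim conjE)
  have ind: "\<forall>A\<in>P. \<forall>u\<in>A. \<forall>v\<in>A. \<not> E u v" using P by (elim conjE)
  have cr: "\<forall>A\<in>P. \<forall>B\<in>P. A \<noteq> B \<longrightarrow> (\<forall>u\<in>A. \<forall>v\<in>B. E u v)" using P by (elim conjE)
  have part: "\<exists>A\<in>P. x \<in> A" for x using U by (metis UNIV_I Union_iff)
  show ?thesis unfolding H_def
  proof (intro allI impI)
    fix i j w assume nij: "\<not> E i j"
    obtain A where A: "A \<in> P" "i \<in> A" using part by blast
    obtain B where B: "B \<in> P" "j \<in> B" using part by blast
    have AB: "A = B"
    proof (rule ccontr)
      assume "A \<noteq> B"
      then have "E i j" using cr A(1) B(1) A(2) B(2) by blast
      then show False using nij by simp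
    qed
    obtain C where C: "C \<in> P" "w \<in> C" using part by blast
    show "E w i \<longleftrightarrow> E w j"
    proof (cases "C = A")
      case True
      have "\<not> E w i" using ind C A True by blast
      moreover have "\<not> E w j" using ind C B True AB by blast
      ultimately show ?thesis by simp
    next
      case False
      have "E w i" using cr C A False by blast
      moreover have "E w j" using cr C B False AB by blast
      ultimately show ?thesis by simp
    qed
  qed
qed

lemma slack_nonneg:
  assumes sg: "simple_graph E"
  shows "0 \<le> lap_max E * (x \<bullet> x) - Q E x"
  using rayleigh[OF sg] by simp

lemma Q_eq_n_imp:
  fixes E :: "'n::finite \<Rightarrow> 'n \<Rightarrow> bool"
  assumes sg: "simple_graph E" and eq: "Q E x = real CARD('n) * (x \<bullet> x)" and nij: "\<not> E i j"
  shows "x $ i = x $ j"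
proof -
  have z: "(\<Sum>i\<in>UNIV. x$i)^2 + (1/2) * (\<Sum>i\<in>UNIV. \<Sum>j\<in>UNIV. (1 - ind E i j) * (x$i - x$j)^2) = 0"
    using Q_le_n[OF sg, of x] eq by simp
  have nn: "\<forall>i j. 0 \<le> (1 - ind E i j) * (x$i - x$j)^2" by (simp add: ind_def)
  have s0: "(\<Sum>i\<in>UNIV. \<Sum>j\<in>UNIV. (1 - ind E i j) * (x$i - x$j)^2) = 0"
  proof -
    have "0 \<le> (\<Sum>i\<in>UNIV. \<Sum>j\<in>UNIV. (1 - ind E i j) * (x$i - x$j)^2)"
      using nn by (intro sum_nonneg) auto
    moreover have "0 \<le> (\<Sum>i\<in>UNIV. x$i)^2" by simp
    ultimately show ?thesis using z by linarith
  qed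
  have t1: "(1 - ind E i j) * (x$i - x$j)^2 \<le> (\<Sum>j\<in>UNIV. (1 - ind E i j) * (x$i - x$j)^2)"
    by (rule member_le_sum) (auto simp: nn)
  have t2: "(\<Sum>j\<in>UNIV. (1 - ind E i j) * (x$i - x$j)^2) \<le> (\<Sum>i\<in>UNIV. \<Sum>j\<in>UNIV. (1 - ind E i j) * (x$i - x$j)^2)"
    by (rule member_le_sum[where f = "\<lambda>i. \<Sum>j\<in>UNIV. (1 - ind E i j) * (x$i - x$j)^2"]) (auto intro: sum_nonneg simp: nn)
  have "(1 - ind E i j) * (x$i - x$j)^2 = 0" using t1 t2 s0 nn[rule_format, of i j] by linarith
  then show ?thesis using nij by (simp add: ind_def)
qed

lemma lam_n_of_H:
  fixes E :: "'n::finite \<Rightarrow> 'n \<Rightarrow> bool"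
  assumes sg: "simple_graph E" and h: "H E" and uv: "E u v"
  shows "lap_max E = real CARD('n)"
proof -
  have irr: "\<And>x. \<not> E x x" and sym: "\<And>x y. E x y \<Longrightarrow> E y x" using sg unfolding simple_graph_def by auto
  define Cu where "Cu = {z. \<not> E u z}"
  define Cv where "Cv = {z. \<not> E v z}"
  have inCu: "i \<in> Cu \<longleftrightarrow> j \<in> Cu" and inCv: "i \<in> Cv \<longleftrightarrow> j \<in> Cv" if "\<not> E i j" for i j
    using h that sym unfolding H_def Cu_def Cv_def by blast+
  have uCu: "u \<in> Cu" "u \<notin> Cv" using irr sym uv unfolding Cu_def Cv_def by auto
  have vCv: "v \<in> Cv" using irr unfolding Cv_def by auto
  have dis: "Cu \<inter> Cv = {}"
  proof (rule ccontr)
    assume "Cu \<inter> Cv \<noteq> {}"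
    then obtain z where z: "\<not> E u z" "\<not> E v z" unfolding Cu_def Cv_def by auto
    then have "\<not> E z v" using sym by blast
    then have "v \<in> Cu \<longleftrightarrow> z \<in> Cu" using inCu by (metis sym)
    moreover have "z \<in> Cu" using z unfolding Cu_def by simp
    ultimately have "\<not> E u v" unfolding Cu_def by simp
    then show False using uv by simp
  qed
  define y where "y = (\<chi> i. (if i \<in> Cu then real (card Cv) else 0) - (if i \<in> Cv then real (card Cu) else 0))"
  have cv0: "card Cv > 0" using vCv by (simp add: card_gt_0_iff) blast
  have y0: "y \<noteq> 0"
  proof
    assume "y = 0"
    then have "y $ u = 0" by simp
    then show False using uCu cv0 unfolding y_def by simp
  qed
  have sy: "(\<Sum>i\<in>UNIV. y $ i) = 0"
    unfolding y_def by (simp add: sum_subtractf sum.If_cases Int_commute)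
  have yc: "y $ i = y $ j" if "\<not> E i j" for i j
    unfolding y_def using inCu[OF that] inCv[OF that] by simp
  have Qy: "Q E y = real CARD('n) * (y \<bullet> y)"
  proof -
    have "(\<Sum>i\<in>UNIV. \<Sum>j\<in>UNIV. (1 - ind E i j) * (y$i - y$j)^2) = 0"
      by (intro sum.neutral ballI) (auto simp: ind_def yc)
    then show ?thesis using Q_le_n[OF sg, of y] sy by simp
  qed
  have "real CARD('n) * (y \<bullet> y) \<le> lap_max E * (y \<bullet> y)" using rayleigh[OF sg, of y] Qy by simp
  moreover have "y \<bullet> y > 0" using y0 by simp
  ultimately have "real CARD('n) \<le> lap_max E" by simp
  then show ?thesis using lam_le_n[OF sg] by simp
qed

lemma slack_zero_iff:
  fixes E :: "'n::finite \<Rightarrow> 'n \<Rightarrow> bool"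
  assumes sg: "simple_graph E"
  shows "(\<forall>w. lap_max E * (X E w \<bullet> X E w) - Q E (X E w) = 0) \<longleftrightarrow> H E"
proof
  assume all: "\<forall>w. lap_max E * (X E w \<bullet> X E w) - Q E (X E w) = 0"
  show "H E"
  proof (cases "\<exists>u v. E u v")
    case False then show ?thesis unfolding H_def by blast
  next
    case True
    then obtain u v where uv: "E u v" by blast
    have n0: "real CARD('n) > 0" using card_gt_0_iff[of "UNIV::'n set"] by simp
    have "laplacian E *v X E u = lap_max E *\<^sub>R X E u"
      using all rayleigh_eq[OF sg, of "X E u"] by simp
    then have "(laplacian E *v X E u) $ u = lap_max E * X E u $ u" by simp
    then have e: "- real (degree E u) = lap_max E * (- real (degree E u) / real CARD('n))"
      unfolding X_coord[OF sg] using sg by (simp add: X_def ind_def simple_graph_def)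
    have "degree E u > 0" unfolding degree_def using uv by (auto simp: card_gt_0_iff)
    then have lam: "lap_max E = real CARD('n)" using e n0 by (simp add: field_simps)
    show ?thesis unfolding H_def
    proof (intro allI impI)
      fix i j w assume nij: "\<not> E i j"
      have "Q E (X E w) = real CARD('n) * (X E w \<bullet> X E w)" using all lam by (metis eq_iff_diff_eq_0)
      then have "X E w $ i = X E w $ j" by (rule Q_eq_n_imp[OF sg _ nij])
      then show "E w i \<longleftrightarrow> E w j" by (simp add: X_def ind_def split: if_splits)
    qed
  qed
next
  assume h: "H E"
  show "\<forall>w. lap_max E * (X E w \<bullet> X E w) - Q E (X E w) = 0"
  proof (cases "\<exists>u v. E u v")
    case False
    then have "X E w = 0" for w by (simp add: X_def ind_def degree_def vec_eq_iff)
    then show ?thesis by (simp add: Q_def)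
  next
    case True
    then obtain u v where uv: "E u v" by blast
    have lam: "lap_max E = real CARD('n)" by (rule lam_n_of_H[OF sg h uv])
    show ?thesis
    proof
      fix w
      have "(\<Sum>i\<in>UNIV. \<Sum>j\<in>UNIV. (1 - ind E i j) * (X E w $ i - X E w $ j)^2) = 0"
        using h by (intro sum.neutral ballI) (auto simp: ind_def X_def H_def)
      then show "lap_max E * (X E w \<bullet> X E w) - Q E (X E w) = 0"
        using Q_le_n[OF sg, of "X E w"] sum_X[of E w] lam by simp
    qed
  qed
qed

theorem theorem2:
  fixes E :: "'n::finite \<Rightarrow> 'n \<Rightarrow> bool"
  assumes "simple_graph E"
  defines "n \<equiv> real CARD('n)"
      and "m \<equiv> real (card (edges E))"
      and "lam \<equiv> lap_max E"
  shows "6 * n * real (num_triangles E)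
           \<ge> (n + lam) * (\<Sum>u\<in>UNIV. real (degree E u) ^ 2) - 2 * n * m * lam
         \<and> (6 * n * real (num_triangles E)
           = (n + lam) * (\<Sum>u\<in>UNIV. real (degree E u) ^ 2) - 2 * n * m * lam
         \<longleftrightarrow> complete_multipartite E)"
proof -
  note sg = assms(1)
  define S where "S = (\<Sum>w\<in>UNIV. lap_max E * (X E w \<bullet> X E w) - Q E (X E w))"
  have id: "6 * n * real (num_triangles E) - ((n + lam) * (\<Sum>u\<in>UNIV. real (degree E u) ^ 2) - 2 * n * m * lam)
      = n * S"
    unfolding n_def m_def lam_def S_def by (rule main_identity[OF sg])
  have n0: "n > 0" unfolding n_def using card_gt_0_iff[of "UNIV::'n set"] by simp
  have ry: "Q E (X E w) \<le> lap_max E * (X E w \<bullet> X E w)" for w by (rule rayleigh[OF sg])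
  have S0: "S \<ge> 0" unfolding S_def using ry by (intro sum_nonneg) (metis diff_ge_0_iff_ge)
  have Siff: "S = 0 \<longleftrightarrow> (\<forall>w. lap_max E * (X E w \<bullet> X E w) - Q E (X E w) = 0)"
    unfolding S_def by (subst sum_nonneg_eq_0_iff) (auto simp: ry)
  have mp: "complete_multipartite E \<longleftrightarrow> H E" using H_imp_mp[OF sg] mp_imp_H[OF sg] by blast
  have "n * S \<ge> 0" using n0 S0 by simp
  moreover have "n * S = 0 \<longleftrightarrow> complete_multipartite E"
    using n0 Siff slack_zero_iff[OF sg] mp by simp
  ultimately show ?thesis using id by (smt (verit))
qed

end
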